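(* (Monogamy of entanglement and local contextuality.) Fix a noncontextuality inequality (data $N$, ${\cal E}_n$, $x_n$ as in the context) and a dimension $d_0$. Let A be a $d_0$-level system, B any finite-dimensional system, and $\rho$ any state of AB with $\rho_\mathrm{A}=\operatorname{tr}_\mathrm{B}\rho$. Define $$E(\rho)\equiv\inf_{\{P_m,|\Psi_m\rangle\}}\sum_mP_m\Big(C^{max}_{d_0}-C_{d_0}\big(\operatorname{tr}_\mathrm{B}|\Psi_m\rangle\langle\Psi_m|\big)\Big),$$ the infimum being over all ensembles of probabilities $P_m$ and pure states $|\Psi_m\rangle$ of AB with $\sum_mP_m|\Psi_m\rangle\langle\Psi_m|=\rho$. Then $$E(\rho)+C_{d_0}(\rho_\mathrm{A})\le C^{max}_{d_0}.$$
   Context: A noncontextuality inequality is specified by an integer $N$, a finite family of subsets ${\cal E}_n\subseteq\{1,\dots,N\}$ and real coefficients $x_n$ such that $\max_{a\in\{\pm1\}^N}\sum_nx_n\prod_{k\in{\cal E}_n}a_k=1$. For a dimension $d$, ${\cal A}_d$ is the set of tuples $(A_1,\dots,A_N)$ of Hermitian operators on $\mathbb C^d$ with $A_k^2=I$ such that $[A_k,A_l]=0$ whenever $k,l$ belong to a common ${\cal E}_n$. For a density matrix $\omega$ on $\mathbb C^d$, $C_d(\omega)=\sup_{(A_k)\in{\cal A}_d}\operatorname{tr}\big(\omega\sum_nx_n\prod_{k\in{\cal E}_n}A_k\big)$, and $C^{max}_d$ is the supremum of $C_d$ over all density matrices on $\mathbb C^d$. (The function $E$ is the convex-roof entanglement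 monotone built from the entropies $S^{lc}_d$; on systems with $\dim A=d_0$ it takes the form given in the claim.) *)

theory Defs
  imports "Jordan_Normal_Form.Matrix"
begin

definition mtrace :: "complex mat \<Rightarrow> complex" where
  "mtrace A = (\<Sum>i<dim_row A. A $$ (i, i))"

definition dagger :: "complex mat \<Rightarrow> complex mat" where
  "dagger A = mat (dim_col A) (dim_row A) (\<lambda>(i, j). cnj (A $$ (j, i)))"

definition hermitian_mat :: "nat \<Rightarrow> complex mat \<Rightarrow> bool" where
  "hermitian_mat d A \<longleftrightarrow> A \<in> carrier_mat d d \<and> dagger A = A"

definition psd_mat :: "nat \<Rightarrow> complex mat \<Rightarrow> bool" where
  "psd_mat d A \<longleftrightarrow> A \<in> carrier_mat d d \<and>
     (\<forall>v \<in> carrier_vec d.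
        let q = (\<Sum>i<d. cnj (v $ i) * (A *\<^sub>v v) $ i) in Im q = 0 \<and> Re q \<ge> 0)"

definition density_mat :: "nat \<Rightarrow> complex mat \<Rightarrow> bool" where
  "density_mat d \<omega> \<longleftrightarrow> hermitian_mat d \<omega> \<and> psd_mat d \<omega> \<and> mtrace \<omega> = 1"

text \<open>The inequality has M terms indexed by n < M; the observables are indexed
  k < N (0-based); term n has context E n \<subseteq> {..<N} and coefficient x n.\<close>

definition sign_vectors :: "nat \<Rightarrow> (nat \<Rightarrow> real) set" where
  "sign_vectors N = {a. \<forall>k<N. a k = 1 \<or> a k = -1}"

definition nc_value :: "nat \<Rightarrow> (nat \<Rightarrow> nat set) \<Rightarrow> (nat \<Rightarrow> real) \<Rightarrow> (nat \<Rightarrow> real) \<Rightarrow> real" where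
  "nc_value M E x a = (\<Sum>n<M. x n * (\<Prod>k\<in>E n. a k))"

definition nc_inequality :: "nat \<Rightarrow> nat \<Rightarrow> (nat \<Rightarrow> nat set) \<Rightarrow> (nat \<Rightarrow> real) \<Rightarrow> bool" where
  "nc_inequality N M E x \<longleftrightarrow>
     (\<forall>n<M. E n \<subseteq> {..<N}) \<and>
     (\<forall>a \<in> sign_vectors N. nc_value M E x a \<le> 1) \<and>
     (\<exists>a \<in> sign_vectors N. nc_value M E x a = 1)"

definition admissible :: "nat \<Rightarrow> nat \<Rightarrow> (nat \<Rightarrow> nat set) \<Rightarrow> nat \<Rightarrow> (nat \<Rightarrow> complex mat) \<Rightarrow> bool" where
  "admissible N M E d A \<longleftrightarrow>
     (\<forall>k<N. hermitian_mat d (A k) \<and> A k * A k = 1\<^sub>m d) \<and>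
     (\<forall>n<M. \<forall>k\<in>E n. \<forall>l\<in>E n. A k * A l = A l * A k)"

definition op_prod :: "nat \<Rightarrow> (nat \<Rightarrow> complex mat) \<Rightarrow> nat set \<Rightarrow> complex mat" where
  "op_prod d A S = foldr (\<lambda>k B. A k * B) (sorted_list_of_set S) (1\<^sub>m d)"

definition bell_operator :: "nat \<Rightarrow> (nat \<Rightarrow> nat set) \<Rightarrow> (nat \<Rightarrow> real) \<Rightarrow> nat \<Rightarrow> (nat \<Rightarrow> complex mat) \<Rightarrow> complex mat" where
  "bell_operator M E x d A = foldr (\<lambda>n B. complex_of_real (x n) \<cdot>\<^sub>m op_prod d A (E n) + B) [0..<M] (0\<^sub>m d d)"

text \<open>C_d(\<omega>): the trace is real for Hermitian operators, we take its real part.\<close>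
definition C_val :: "nat \<Rightarrow> nat \<Rightarrow> (nat \<Rightarrow> nat set) \<Rightarrow> (nat \<Rightarrow> real) \<Rightarrow> nat \<Rightarrow> complex mat \<Rightarrow> real" where
  "C_val N M E x d \<omega> =
     Sup {Re (mtrace (\<omega> * bell_operator M E x d A)) | A. admissible N M E d A}"

definition C_max :: "nat \<Rightarrow> nat \<Rightarrow> (nat \<Rightarrow> nat set) \<Rightarrow> (nat \<Rightarrow> real) \<Rightarrow> nat \<Rightarrow> real" where
  "C_max N M E x d = Sup {C_val N M E x d \<omega> | \<omega>. density_mat d \<omega>}"

text \<open>C^{d0} \<otimes> C^{dB} is identified with C^{d0*dB}, basis |a\<rangle>|b\<rangle> \<mapsto> index a*dB+b.\<close>
definition ptrace_B :: "nat \<Rightarrow> nat \<Rightarrow> complex mat \<Rightarrow> complex mat" where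
  "ptrace_B d0 dB \<rho> = mat d0 d0 (\<lambda>(i, j). \<Sum>b<dB. \<rho> $$ (i * dB + b, j * dB + b))"

definition proj_vec :: "complex vec \<Rightarrow> complex mat" where
  "proj_vec \<psi> = mat (dim_vec \<psi>) (dim_vec \<psi>) (\<lambda>(i, j). \<psi> $ i * cnj (\<psi> $ j))"

definition pure_state :: "nat \<Rightarrow> complex vec \<Rightarrow> bool" where
  "pure_state d \<psi> \<longleftrightarrow> \<psi> \<in> carrier_vec d \<and> (\<Sum>i<d. cmod (\<psi> $ i) ^ 2) = 1"

definition pure_ensemble :: "nat \<Rightarrow> complex mat \<Rightarrow> nat \<Rightarrow> (nat \<Rightarrow> real) \<Rightarrow> (nat \<Rightarrow> complex vec) \<Rightarrow> bool" where
  "pure_ensemble D \<rho> K P \<Psi> \<longleftrightarrow>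
     (\<forall>m<K. P m \<ge> 0 \<and> pure_state D (\<Psi> m)) \<and> (\<Sum>m<K. P m) = 1 \<and>
     foldr (\<lambda>m B. complex_of_real (P m) \<cdot>\<^sub>m proj_vec (\<Psi> m) + B) [0..<K] (0\<^sub>m D D) = \<rho>"

definition ent_E :: "nat \<Rightarrow> nat \<Rightarrow> (nat \<Rightarrow> nat set) \<Rightarrow> (nat \<Rightarrow> real) \<Rightarrow> nat \<Rightarrow> nat \<Rightarrow> complex mat \<Rightarrow> real" where
  "ent_E N M E x d0 dB \<rho> =
     Inf {(\<Sum>m<K. P m * (C_max N M E x d0 - C_val N M E x d0 (ptrace_B d0 dB (proj_vec (\<Psi> m)))))
          | K P \<Psi>. pure_ensemble (d0 * dB) \<rho> K P \<Psi>}"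

end

theory Submission
  imports Defs
begin


definition quadf :: "nat \<Rightarrow> (nat \<Rightarrow> nat \<Rightarrow> complex) \<Rightarrow> (nat \<Rightarrow> complex) \<Rightarrow> complex" where
  "quadf D R v = (\<Sum>i<D. cnj (v i) * (\<Sum>j<D. R i j * v j))"

definition hermf :: "nat \<Rightarrow> (nat \<Rightarrow> nat \<Rightarrow> complex) \<Rightarrow> bool" where
  "hermf D R \<longleftrightarrow> (\<forall>i<D. \<forall>j<D. R j i = cnj (R i j))"

definition psdf :: "nat \<Rightarrow> (nat \<Rightarrow> nat \<Rightarrow> complex) \<Rightarrow> bool" where
  "psdf D R \<longleftrightarrow> (\<forall>v. Im (quadf D R v) = 0 \<and> Re (quadf D R v) \<ge> 0)"

lemma sum_delta_r:
  fixes f :: "nat \<Rightarrow> complex"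
  assumes "k < D" shows "(\<Sum>j<D. f j * (if j = k then s else 0)) = f k * s"
proof -
  have "(\<Sum>j<D. f j * (if j = k then s else 0)) = (\<Sum>j<D. if j = k then f k * s else 0)"
    by (rule sum.cong) auto
  then show ?thesis using assms by simp
qed

lemma sum_delta_cnj:
  fixes f :: "nat \<Rightarrow> complex"
  assumes "k < D" shows "(\<Sum>j<D. cnj (if j = k then s else 0) * f j) = cnj s * f k"
proof -
  have "(\<Sum>j<D. cnj (if j = k then s else 0) * f j) = (\<Sum>j<D. if j = k then cnj s * f k else 0)"
    by (rule sum.cong) auto
  then show ?thesis using assms by simp
qed

lemma sum_delta_l:
  fixes f :: "nat \<Rightarrow> complex"
  assumes "k < D" shows "(\<Sum>j<D. (if j = k then s else 0) * f j) = s * f k"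
proof -
  have "(\<Sum>j<D. (if j = k then s else 0) * f j) = (\<Sum>j<D. if j = k then s * f k else 0)"
    by (rule sum.cong) auto
  then show ?thesis using assms by simp
qed

lemma herm_cnj: "hermf D R \<Longrightarrow> i < D \<Longrightarrow> j < D \<Longrightarrow> cnj (R i j) = R j i"
  unfolding hermf_def by (metis complex_cnj_cnj)

lemma quad_pert:
  assumes h: "hermf D R" and k: "k < D"
  shows "quadf D R (\<lambda>i. v i + (if i = k then s else 0)) =
    quadf D R v + cnj s * (\<Sum>j<D. R k j * v j) + s * cnj (\<Sum>j<D. R k j * v j) + cnj s * s * R k k"
proof -
  let ?e = "\<lambda>i. (if i = k then s else 0)"
  have inner: "(\<Sum>j<D. R i j * (v j + ?e j)) = (\<Sum>j<D. R i j * v j) + R i k * s" for i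
    using k by (simp add: distrib_left sum.distrib sum_delta_r)
  have "quadf D R (\<lambda>i. v i + ?e i) =
     (\<Sum>i<D. cnj (v i) * (\<Sum>j<D. R i j * v j)) + (\<Sum>i<D. cnj (v i) * (R i k * s))
     + (\<Sum>i<D. cnj (?e i) * (\<Sum>j<D. R i j * v j)) + (\<Sum>i<D. cnj (?e i) * (R i k * s))"
    unfolding quadf_def inner by (simp add: distrib_left distrib_right sum.distrib)
  also have "(\<Sum>i<D. cnj (?e i) * (\<Sum>j<D. R i j * v j)) = cnj s * (\<Sum>j<D. R k j * v j)"
    by (rule sum_delta_cnj[OF k])
  also have "(\<Sum>i<D. cnj (?e i) * (R i k * s)) = cnj s * s * R k k"
    using sum_delta_cnj[OF k, of s "\<lambda>i. R i k * s"] by simp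
  also have "(\<Sum>i<D. cnj (v i) * (R i k * s)) = s * cnj (\<Sum>j<D. R k j * v j)"
  proof -
    have "(\<Sum>i<D. cnj (v i) * (R i k * s)) = (\<Sum>i<D. s * cnj (R k i * v i))"
    proof (rule sum.cong)
      fix i assume "i \<in> {..<D}"
      then have "cnj (R k i) = R i k" using herm_cnj[OF h k] by simp
      then show "cnj (v i) * (R i k * s) = s * cnj (R k i * v i)" by simp
    qed simp
    also have "\<dots> = s * (\<Sum>i<D. cnj (R k i * v i))" by (simp only: sum_distrib_left)
    finally have "(\<Sum>i<D. cnj (v i) * (R i k * s)) = s * (\<Sum>i<D. cnj (R k i * v i))" .
    then show ?thesis by (simp add: cnj_sum)
  qed
  finally show ?thesis unfolding quadf_def by (simp add: add_ac)
qed

lemma psd_diag: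
  assumes p: "psdf D R" and k: "k < D"
  shows "Im (R k k) = 0" "Re (R k k) \<ge> 0"
proof -
  have "quadf D R (\<lambda>i. if i = k then 1 else 0) = R k k"
    using k sum_delta_cnj[OF k, of 1 "\<lambda>i. R i k"] unfolding quadf_def by (simp add: sum_delta_r)
  then show "Im (R k k) = 0" "Re (R k k) \<ge> 0" using p unfolding psdf_def by metis+
qed

lemma psd_cs:
  assumes h: "hermf D R" and p: "psdf D R" and k: "k < D"
  shows "(cmod (\<Sum>j<D. R k j * v j))\<^sup>2 \<le> Re (R k k) * Re (quadf D R v)"
proof -
  define \<alpha> where "\<alpha> = (\<Sum>j<D. R k j * v j)"
  define a where "a = (cmod \<alpha>)\<^sup>2"
  define r where "r = Re (R k k)"
  define Q where "Q = Re (quadf D R v)"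
  have Rkk: "R k k = complex_of_real r" using psd_diag[OF p k] unfolding r_def
    by (simp add: complex_eq_iff)
  have r0: "r \<ge> 0" using psd_diag[OF p k] r_def by simp
  have key: "Q - 2 * t * a + t\<^sup>2 * a * r \<ge> 0" for t :: real
  proof -
    have "Re (quadf D R (\<lambda>i. v i + (if i = k then - (complex_of_real t * \<alpha>) else 0))) \<ge> 0"
      using p unfolding psdf_def by blast
    also have "quadf D R (\<lambda>i. v i + (if i = k then - (complex_of_real t * \<alpha>) else 0))
       = quadf D R v - complex_of_real t * (cnj \<alpha> * \<alpha>) - complex_of_real t * (\<alpha> * cnj \<alpha>)
         + complex_of_real (t^2 * r) * (cnj \<alpha> * \<alpha>)"
      unfolding quad_pert[OF h k] \<alpha>_def[symmetric] Rkk
      by (simp add: power2_eq_square algebra_simps)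
    also have "cnj \<alpha> * \<alpha> = complex_of_real a" unfolding a_def
      by (subst mult.commute) (rule complex_norm_square[symmetric])
    also have "\<alpha> * cnj \<alpha> = complex_of_real a" unfolding a_def
      by (rule complex_norm_square[symmetric])
    finally show ?thesis unfolding Q_def by (simp add: mult_ac)
  qed
  show ?thesis
  proof (cases "a = 0")
    case True
    have "Q \<ge> 0" using p unfolding psdf_def Q_def by blast
    then show ?thesis using True r0 unfolding a_def \<alpha>_def r_def Q_def by simp
  next
    case False
    then have apos: "a > 0" unfolding a_def by simp
    show ?thesis
    proof (cases "r = 0")
      case True
      have "Q - 2 * ((Q + 1) / (2 * a)) * a + ((Q + 1) / (2 * a))\<^sup>2 * a * r \<ge> 0" by (rule key)
      then have False using True apos by (simp add: field_simps)
      then show ?thesis ..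
    next
      case False
      then have rpos: "r > 0" using r0 by simp
      have "Q - 2 * (1 / r) * a + (1 / r)\<^sup>2 * a * r \<ge> 0" by (rule key)
      then have "Q - a / r \<ge> 0" using rpos by (simp add: power2_eq_square field_simps)
      then have "a \<le> r * Q" using rpos by (simp add: field_simps)
      then show ?thesis unfolding a_def \<alpha>_def r_def Q_def .
    qed
  qed
qed



lemma quad_rank1:
  "quadf D (\<lambda>a b. R a b - w a * cnj (w b)) v =
   quadf D R v - (\<Sum>i<D. cnj (v i) * w i) * (\<Sum>j<D. cnj (w j) * v j)"
proof -
  have 1: "(\<Sum>j<D. (R i j - w i * cnj (w j)) * v j) = (\<Sum>j<D. R i j * v j) - w i * (\<Sum>j<D. cnj (w j) * v j)" for i
  proof -
    have "(\<Sum>j<D. (R i j - w i * cnj (w j)) * v j) = (\<Sum>j<D. R i j * v j - w i * (cnj (w j) * v j))"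
      by (rule sum.cong) (auto simp: left_diff_distrib)
    also have "\<dots> = (\<Sum>j<D. R i j * v j) - w i * (\<Sum>j<D. cnj (w j) * v j)"
      by (simp only: sum_subtractf sum_distrib_left)
    finally show ?thesis .
  qed
  have 2: "(\<Sum>i<D. cnj (v i) * ((\<Sum>j<D. R i j * v j) - w i * S)) =
    (\<Sum>i<D. cnj (v i) * (\<Sum>j<D. R i j * v j)) - (\<Sum>i<D. cnj (v i) * w i) * S" for S
  proof -
    have "(\<Sum>i<D. cnj (v i) * ((\<Sum>j<D. R i j * v j) - w i * S)) =
      (\<Sum>i<D. cnj (v i) * (\<Sum>j<D. R i j * v j) - cnj (v i) * w i * S)"
      by (rule sum.cong) (auto simp: right_diff_distrib)
    also have "\<dots> = (\<Sum>i<D. cnj (v i) * (\<Sum>j<D. R i j * v j)) - (\<Sum>i<D. cnj (v i) * w i) * S"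
      by (simp only: sum_subtractf sum_distrib_right)
    finally show ?thesis .
  qed
  show ?thesis unfolding quadf_def 1 2 ..
qed

lemma chol_step:
  assumes h: "hermf D R" and p: "psdf D R" and k: "k < D"
    and z: "\<forall>a<D. \<forall>b<D. (a < k \<or> b < k) \<longrightarrow> R a b = 0"
    and w_def: "\<And>a. w a = R a k / complex_of_real (sqrt (Re (R k k)))"
  shows "hermf D (\<lambda>a b. R a b - w a * cnj (w b))"
    "psdf D (\<lambda>a b. R a b - w a * cnj (w b))"
    "\<forall>a<D. \<forall>b<D. (a < Suc k \<or> b < Suc k) \<longrightarrow> R a b - w a * cnj (w b) = 0"
proof -
  define r where "r = Re (R k k)"
  define sr where "sr = sqrt r"
  have r0: "r \<ge> 0" and Rkk: "R k k = complex_of_real r"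
    using psd_diag[OF p k] unfolding r_def by (auto simp: complex_eq_iff)
  have wdef: "w a = R a k / complex_of_real sr" for a unfolding w_def sr_def r_def by simp
  have f1: "R k b = 0" if "r = 0" "b < D" for b
  proof -
    have "(cmod (\<Sum>j<D. R k j * (if j = b then 1 else 0)))\<^sup>2 \<le> Re (R k k) * Re (quadf D R (\<lambda>j. if j = b then 1 else 0))"
      by (rule psd_cs[OF h p k])
    then have "(cmod (R k b))\<^sup>2 \<le> 0" using that sum_delta_r[OF \<open>b < D\<close>, of "R k" 1] unfolding r_def by simp
    then show ?thesis by simp
  qed
  show hR': "hermf D (\<lambda>a b. R a b - w a * cnj (w b))"
    unfolding hermf_def
  proof (intro allI impI)
    fix i j assume ij: "i < D" "j < D"
    show "R j i - w j * cnj (w i) = cnj (R i j - w i * cnj (w j))"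
      by (simp add: herm_cnj[OF h ij] mult.commute)
  qed
  show "psdf D (\<lambda>a b. R a b - w a * cnj (w b))"
    unfolding psdf_def
  proof
    fix v
    define \<alpha> where "\<alpha> = (\<Sum>j<D. R k j * v j)"
    have s1: "(\<Sum>j<D. cnj (w j) * v j) = \<alpha> / complex_of_real sr"
    proof -
      have "(\<Sum>j<D. cnj (w j) * v j) = (\<Sum>j<D. R k j * v j / complex_of_real sr)"
      proof (rule sum.cong)
        fix j assume "j \<in> {..<D}"
        then have "cnj (R j k) = R k j" using herm_cnj[OF h _ k] by simp
        then show "cnj (w j) * v j = R k j * v j / complex_of_real sr" unfolding wdef by simp
      qed simp
      then show ?thesis unfolding \<alpha>_def by (simp only: sum_divide_distrib)
    qed
    have s2: "(\<Sum>i<D. cnj (v i) * w i) = cnj (\<alpha> / complex_of_real sr)"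
    proof -
      have "(\<Sum>i<D. cnj (v i) * w i) = cnj (\<Sum>j<D. cnj (w j) * v j)"
        by (simp add: cnj_sum mult.commute)
      then show ?thesis using s1 by simp
    qed
    have prod: "cnj (\<alpha> / complex_of_real sr) * (\<alpha> / complex_of_real sr) = complex_of_real ((cmod \<alpha>)\<^sup>2 / r)"
    proof -
      have "cnj (\<alpha> / complex_of_real sr) * (\<alpha> / complex_of_real sr) = (cnj \<alpha> * \<alpha>) / complex_of_real (sr * sr)"
        by simp
      also have "sr * sr = r" unfolding sr_def using r0 by simp
      also have "cnj \<alpha> * \<alpha> = complex_of_real ((cmod \<alpha>)\<^sup>2)"
        by (subst mult.commute) (rule complex_norm_square[symmetric])
      finally show ?thesis by simp
    qed
    have q: "quadf D (\<lambda>a b. R a b - w a * cnj (w b)) v = quadf D R v - complex_of_real ((cmod \<alpha>)\<^sup>2 / r)"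
      unfolding quad_rank1 s1 s2 prod ..
    have cs: "(cmod \<alpha>)\<^sup>2 \<le> r * Re (quadf D R v)" using psd_cs[OF h p k] unfolding \<alpha>_def r_def .
    have Q0: "Im (quadf D R v) = 0" "Re (quadf D R v) \<ge> 0" using p unfolding psdf_def by auto
    have "(cmod \<alpha>)\<^sup>2 / r \<le> Re (quadf D R v)"
    proof (cases "r = 0")
      case True then show ?thesis using Q0 by simp
    next
      case False then show ?thesis using cs r0 by (simp add: field_simps)
    qed
    then show "Im (quadf D (\<lambda>a b. R a b - w a * cnj (w b)) v) = 0 \<and>
      0 \<le> Re (quadf D (\<lambda>a b. R a b - w a * cnj (w b)) v)" unfolding q using Q0 by simp
  qed
  have rowk: "R k b - w k * cnj (w b) = 0" if "b < D" for b
  proof (cases "r = 0")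
    case True
    then show ?thesis using f1[OF True that] f1[OF True k] unfolding wdef by simp
  next
    case False
    then have srpos: "sr > 0" using r0 unfolding sr_def by simp
    have wk: "w k = complex_of_real sr" unfolding wdef Rkk
    proof -
      have "r = sr * sr" unfolding sr_def using r0 by simp
      then show "complex_of_real r / complex_of_real sr = complex_of_real sr" using srpos
        by (simp add: field_simps)
    qed
    have "cnj (w b) = R k b / complex_of_real sr"
      using herm_cnj[OF h] k that unfolding wdef by simp
    then show ?thesis using wk srpos by simp
  qed
  show "\<forall>a<D. \<forall>b<D. (a < Suc k \<or> b < Suc k) \<longrightarrow> R a b - w a * cnj (w b) = 0"
  proof (intro allI impI)
    fix a b assume ab: "a < D" "b < D" "a < Suc k \<or> b < Suc k"
    have wz: "w c = 0" if "c < k" for c using z that k unfolding wdef by simp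
    show "R a b - w a * cnj (w b) = 0"
    proof (cases "a < k \<or> b < k")
      case True then show ?thesis using z ab wz by auto
    next
      case False
      then have "a = k \<or> b = k" using ab by auto
      then show ?thesis
      proof
        assume "a = k" then show ?thesis using rowk ab by simp
      next
        assume "b = k"
        have "R b a - w b * cnj (w a) = 0" using rowk ab \<open>b = k\<close> by simp
        then show ?thesis using herm_cnj[OF hR' ab(1) ab(2)]
          by (metis complex_cnj_zero_iff)
      qed
    qed
  qed
qed

lemma chol_exists:
  assumes h: "hermf D \<rho>" and p: "psdf D \<rho>"
  shows "k \<le> D \<Longrightarrow> \<exists>u R. hermf D R \<and> psdf D R \<and> (\<forall>a<D. \<forall>b<D. (a < k \<or> b < k) \<longrightarrow> R a b = 0)
     \<and> (\<forall>a<D. \<forall>b<D. \<rho> a b = (\<Sum>m<k. u m a * cnj (u m b)) + R a b)"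
proof (induction k)
  case 0
  show ?case using h p by (intro exI[of _ "\<lambda>_ _. 0"] exI[of _ \<rho>]) auto
next
  case (Suc k)
  then obtain u R where uR: "hermf D R" "psdf D R" "\<forall>a<D. \<forall>b<D. (a < k \<or> b < k) \<longrightarrow> R a b = 0"
     "\<forall>a<D. \<forall>b<D. \<rho> a b = (\<Sum>m<k. u m a * cnj (u m b)) + R a b" by auto
  have k: "k < D" using Suc by simp
  define w where "w \<equiv> (\<lambda>a. R a k / complex_of_real (sqrt (Re (R k k))))"
  have wd: "\<And>a. w a = R a k / complex_of_real (sqrt (Re (R k k)))" by (simp add: w_def)
  note st = chol_step[OF uR(1,2) k uR(3) wd]
  have dec: "\<forall>a<D. \<forall>b<D. \<rho> a b = (\<Sum>m<Suc k. (u(k := w)) m a * cnj ((u(k := w)) m b)) + (R a b - w a * cnj (w b))"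
    using uR(4) by simp
  show ?case
    apply (rule exI[of _ "u(k := w)"])
    apply (rule exI[of _ "\<lambda>a b. R a b - w a * cnj (w b)"])
    apply (intro conjI st(1) st(2) st(3) dec)
    done
qed



lemma foldr_sum_carrier:
  assumes "\<forall>m\<in>set ms. f m \<in> carrier_mat n n"
  shows "foldr (\<lambda>m B. f m + B) ms (0\<^sub>m n n) \<in> carrier_mat n n"
  using assms by (induction ms) auto

lemma foldr_sum_index:
  assumes "\<forall>m\<in>set ms. f m \<in> carrier_mat n n" "i < n" "j < n"
  shows "foldr (\<lambda>m B. f m + B) ms (0\<^sub>m n n) $$ (i, j) = sum_list (map (\<lambda>m. f m $$ (i, j)) ms)"
  using assms
proof (induction ms)
  case Nil then show ?case by simp
next
  case (Cons a ms)
  have c: "foldr (\<lambda>m B. f m + B) ms (0\<^sub>m n n) \<in> carrier_mat n n"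
    using Cons.prems(1) by (intro foldr_sum_carrier) auto
  have fa: "f a \<in> carrier_mat n n" using Cons.prems(1) by simp
  show ?case using Cons c fa by simp
qed

lemma sum_list_upt_lessThan: "sum_list (map g [0..<K]) = (\<Sum>m<K. g m)"
  by (simp add: interv_sum_list_conv_sum_set_nat atLeast0LessThan)

lemma foldr_upt_index:
  assumes "\<forall>m<K. f m \<in> carrier_mat n n" "i < n" "j < n"
  shows "foldr (\<lambda>m B. f m + B) [0..<K] (0\<^sub>m n n) $$ (i, j) = (\<Sum>m<K. f m $$ (i, j))"
  using foldr_sum_index[of "[0..<K]" f n i j] assms by (simp add: sum_list_upt_lessThan)

lemma foldr_upt_carrier:
  assumes "\<forall>m<K. f m \<in> carrier_mat n n"
  shows "foldr (\<lambda>m B. f m + B) [0..<K] (0\<^sub>m n n) \<in> carrier_mat n n"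
  using foldr_sum_carrier[of "[0..<K]" f n] assms by simp

lemma density_hermf:
  assumes "density_mat D \<rho>" shows "hermf D (\<lambda>a b. \<rho> $$ (a, b))"
  unfolding hermf_def
proof (intro allI impI)
  fix i j assume ij: "i < D" "j < D"
  have c: "\<rho> \<in> carrier_mat D D" and dg: "dagger \<rho> = \<rho>"
    using assms unfolding density_mat_def hermitian_mat_def by auto
  have "\<rho> $$ (j, i) = dagger \<rho> $$ (j, i)" using dg by simp
  also have "\<dots> = cnj (\<rho> $$ (i, j))" using c ij unfolding dagger_def by simp
  finally show "\<rho> $$ (j, i) = cnj (\<rho> $$ (i, j))" .
qed

lemma density_psdf:
  assumes "density_mat D \<rho>" shows "psdf D (\<lambda>a b. \<rho> $$ (a, b))"
  unfolding psdf_def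
proof
  fix v :: "nat \<Rightarrow> complex"
  have c: "\<rho> \<in> carrier_mat D D" and p: "psd_mat D \<rho>"
    using assms unfolding density_mat_def hermitian_mat_def by auto
  have vc: "vec D v \<in> carrier_vec D" by simp
  have "(\<Sum>i<D. cnj (vec D v $ i) * (\<rho> *\<^sub>v vec D v) $ i) = quadf D (\<lambda>a b. \<rho> $$ (a, b)) v"
    unfolding quadf_def
  proof (rule sum.cong)
    fix i assume i: "i \<in> {..<D}"
    have "(\<rho> *\<^sub>v vec D v) $ i = (\<Sum>j<D. \<rho> $$ (i, j) * v j)"
      using c i by (simp add: scalar_prod_def atLeast0LessThan)
    then show "cnj (vec D v $ i) * (\<rho> *\<^sub>v vec D v) $ i = cnj (v i) * (\<Sum>j<D. \<rho> $$ (i, j) * v j)"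
      using i by simp
  qed simp
  then show "Im (quadf D (\<lambda>a b. \<rho> $$ (a, b)) v) = 0 \<and> 0 \<le> Re (quadf D (\<lambda>a b. \<rho> $$ (a, b)) v)"
    using p vc unfolding psd_mat_def Let_def by metis
qed

lemma density_pos: assumes "density_mat D \<rho>" shows "D > 0"
proof (rule ccontr)
  assume "\<not> D > 0"
  then have "D = 0" by simp
  moreover have "\<rho> \<in> carrier_mat D D" "mtrace \<rho> = 1"
    using assms unfolding density_mat_def hermitian_mat_def by auto
  ultimately show False unfolding mtrace_def by simp
qed

lemma ensemble_exists:
  assumes dens: "density_mat D \<rho>"
  shows "\<exists>K P \<Psi>. pure_ensemble D \<rho> K P \<Psi>"
proof -
  have D0: "D > 0" by (rule density_pos[OF dens])
  have c: "\<rho> \<in> carrier_mat D D" and tr: "mtrace \<rho> = 1"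
    using dens unfolding density_mat_def hermitian_mat_def by auto
  obtain u R where uR0: "hermf D R" "psdf D R" "\<forall>a<D. \<forall>b<D. (a < D \<or> b < D) \<longrightarrow> R a b = 0"
    "\<forall>a<D. \<forall>b<D. \<rho> $$ (a, b) = (\<Sum>m<D. u m a * cnj (u m b)) + R a b"
    using chol_exists[OF density_hermf[OF dens] density_psdf[OF dens] order_refl] by blast
  note uR = uR0(3,4)
  have dec: "\<rho> $$ (a, b) = (\<Sum>m<D. u m a * cnj (u m b))" if "a < D" "b < D" for a b
    using uR that by simp
  define P where "P m = (\<Sum>a<D. (cmod (u m a))\<^sup>2)" for m
  define \<Psi> where "\<Psi> m = (if P m = 0 then vec D (\<lambda>a. if a = 0 then 1 else 0)
      else vec D (\<lambda>a. u m a / complex_of_real (sqrt (P m))))" for m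
  have P0: "P m \<ge> 0" for m unfolding P_def by (simp add: sum_nonneg)
  have Pz: "u m a = 0" if "P m = 0" "a < D" for m a
  proof -
    have "\<forall>a\<in>{..<D}. (cmod (u m a))\<^sup>2 = 0"
      using that(1) unfolding P_def by (subst sum_nonneg_eq_0_iff[symmetric]) auto
    then show ?thesis using that(2) by simp
  qed
  have pure: "pure_state D (\<Psi> m)" for m
  proof (cases "P m = 0")
    case True
    have "(\<Sum>i<D. (cmod (if i = 0 then 1 else 0 :: complex))\<^sup>2) = (\<Sum>i<D. if i = 0 then 1 else 0)"
      by (rule sum.cong) auto
    also have "\<dots> = 1" using D0 by simp
    finally show ?thesis unfolding pure_state_def \<Psi>_def using True by simp
  next
    case False
    then have Ppos: "P m > 0" using P0[of m] by simp
    have "(\<Sum>i<D. (cmod (u m i / complex_of_real (sqrt (P m))))\<^sup>2) = (\<Sum>i<D. (cmod (u m i))\<^sup>2 / P m)"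
      using Ppos by (intro sum.cong) (auto simp: norm_divide power_divide)
    also have "\<dots> = 1" using Ppos unfolding P_def[of m] by (simp add: sum_divide_distrib[symmetric])
    finally show ?thesis unfolding pure_state_def \<Psi>_def using False by simp
  qed
  have sumP: "(\<Sum>m<D. P m) = 1"
  proof -
    have "1 = (\<Sum>i<D. \<rho> $$ (i, i))" using tr c unfolding mtrace_def by simp
    also have "\<dots> = (\<Sum>i<D. \<Sum>m<D. complex_of_real ((cmod (u m i))\<^sup>2))"
    proof (rule sum.cong)
      fix i assume "i \<in> {..<D}"
      then show "\<rho> $$ (i, i) = (\<Sum>m<D. complex_of_real ((cmod (u m i))\<^sup>2))"
        using dec complex_norm_square by simp
    qed simp
    also have "\<dots> = complex_of_real (\<Sum>m<D. P m)"
      unfolding P_def of_real_sum by (rule sum.swap)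
    finally show ?thesis by (metis of_real_eq_1_iff)
  qed
  have entry: "complex_of_real (P m) * (\<Psi> m $ a * cnj (\<Psi> m $ b)) = u m a * cnj (u m b)"
    if "a < D" "b < D" for m a b
  proof (cases "P m = 0")
    case True then show ?thesis using Pz that by simp
  next
    case False
    then have Ppos: "P m > 0" using P0[of m] by simp
    define s where "s = complex_of_real (sqrt (P m))"
    have ss: "s * s = complex_of_real (P m)" unfolding s_def of_real_mult[symmetric] using Ppos
      by simp
    have s0: "s \<noteq> 0" unfolding s_def using Ppos by simp
    have cs: "cnj s = s" unfolding s_def by simp
    have "\<Psi> m $ a * cnj (\<Psi> m $ b) = u m a * cnj (u m b) / (s * s)"
      using that False unfolding \<Psi>_def s_def[symmetric] by (simp add: cs)
    then show ?thesis using ss s0 Ppos by simp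
  qed
  have pcar: "\<forall>m<D. complex_of_real (P m) \<cdot>\<^sub>m proj_vec (\<Psi> m) \<in> carrier_mat D D"
    using pure unfolding pure_state_def proj_vec_def by auto
  have "foldr (\<lambda>m B. complex_of_real (P m) \<cdot>\<^sub>m proj_vec (\<Psi> m) + B) [0..<D] (0\<^sub>m D D) = \<rho>"
  proof (rule eq_matI)
    fix i j assume ij: "i < dim_row \<rho>" "j < dim_col \<rho>"
    then have ij': "i < D" "j < D" using c by auto
    have "foldr (\<lambda>m B. complex_of_real (P m) \<cdot>\<^sub>m proj_vec (\<Psi> m) + B) [0..<D] (0\<^sub>m D D) $$ (i, j)
      = (\<Sum>m<D. (complex_of_real (P m) \<cdot>\<^sub>m proj_vec (\<Psi> m)) $$ (i, j))"
      by (rule foldr_upt_index[OF pcar ij'])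
    also have "\<dots> = (\<Sum>m<D. u m i * cnj (u m j))"
    proof (rule sum.cong)
      fix m assume "m \<in> {..<D}"
      have "\<Psi> m \<in> carrier_vec D" using pure unfolding pure_state_def by auto
      then show "(complex_of_real (P m) \<cdot>\<^sub>m proj_vec (\<Psi> m)) $$ (i, j) = u m i * cnj (u m j)"
        using entry[OF ij'] ij' unfolding proj_vec_def by simp
    qed simp
    also have "\<dots> = \<rho> $$ (i, j)" using dec[OF ij'] by simp
    finally show "foldr (\<lambda>m B. complex_of_real (P m) \<cdot>\<^sub>m proj_vec (\<Psi> m) + B) [0..<D] (0\<^sub>m D D) $$ (i, j) = \<rho> $$ (i, j)" .
  qed (use foldr_upt_carrier[OF pcar] c in auto)
  then have "pure_ensemble D \<rho> D P \<Psi>"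
    unfolding pure_ensemble_def using P0 pure sumP by auto
  then show ?thesis by blast
qed



lemma dagger_carrier: "A \<in> carrier_mat n m \<Longrightarrow> dagger A \<in> carrier_mat m n"
  unfolding dagger_def by simp

lemma dagger_index: "A \<in> carrier_mat n m \<Longrightarrow> i < m \<Longrightarrow> j < n \<Longrightarrow> dagger A $$ (i, j) = cnj (A $$ (j, i))"
  unfolding dagger_def by simp

lemma dagger_mult:
  assumes A: "A \<in> carrier_mat n n" and B: "B \<in> carrier_mat n n"
  shows "dagger (A * B) = dagger B * dagger A"
proof (rule eq_matI)
  fix i j assume "i < dim_row (dagger B * dagger A)" "j < dim_col (dagger B * dagger A)"
  then have ij: "i < n" "j < n" using A B dagger_carrier by auto
  have "dagger (A * B) $$ (i, j) = cnj ((A * B) $$ (j, i))"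
    using A B ij by (intro dagger_index) auto
  also have "\<dots> = cnj (\<Sum>k<n. A $$ (j, k) * B $$ (k, i))"
    using A B ij by (simp add: scalar_prod_def atLeast0LessThan)
  also have "\<dots> = (\<Sum>k<n. dagger B $$ (i, k) * dagger A $$ (k, j))"
    unfolding cnj_sum using A B ij by (intro sum.cong) (auto simp: dagger_index mult.commute)
  also have "\<dots> = (dagger B * dagger A) $$ (i, j)"
    using A B ij dagger_carrier[OF A] dagger_carrier[OF B] by (simp add: scalar_prod_def atLeast0LessThan)
  finally show "dagger (A * B) $$ (i, j) = (dagger B * dagger A) $$ (i, j)" .
qed (use A B in \<open>auto simp: dagger_def\<close>)

definition unit_mat :: "nat \<Rightarrow> complex mat \<Rightarrow> bool" where
  "unit_mat n U \<longleftrightarrow> U \<in> carrier_mat n n \<and> dagger U * U = 1\<^sub>m n"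

lemma dagger_one: "dagger (1\<^sub>m n) = 1\<^sub>m n"
  by (rule eq_matI) (auto simp: dagger_def)

lemma unit_one: "unit_mat n (1\<^sub>m n)"
  unfolding unit_mat_def dagger_one by simp

lemma unit_mult:
  assumes "unit_mat n A" "unit_mat n B" shows "unit_mat n (A * B)"
proof -
  have A: "A \<in> carrier_mat n n" "dagger A * A = 1\<^sub>m n" and B: "B \<in> carrier_mat n n" "dagger B * B = 1\<^sub>m n"
    using assms unfolding unit_mat_def by auto
  have dA: "dagger A \<in> carrier_mat n n" and dB: "dagger B \<in> carrier_mat n n"
    using A B dagger_carrier by auto
  have a: "dagger A * (A * B) = B"
  proof -
    have "dagger A * (A * B) = (dagger A * A) * B" by (rule assoc_mult_mat[OF dA A(1) B(1), symmetric])
    also have "\<dots> = B" using A B by simp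
    finally show ?thesis .
  qed
  have "dagger (A * B) * (A * B) = (dagger B * dagger A) * (A * B)" using dagger_mult A B by simp
  also have "\<dots> = dagger B * (dagger A * (A * B))"
    by (rule assoc_mult_mat[OF dB dA mult_carrier_mat[OF A(1) B(1)]])
  also have "\<dots> = dagger B * B" using a by simp
  finally show ?thesis using A B B(2) unfolding unit_mat_def by simp
qed

lemma cnj_mult_self: "cnj z * z = complex_of_real ((cmod z)\<^sup>2)"
  by (subst mult.commute) (rule complex_norm_square[symmetric])

lemma unit_entry:
  assumes "unit_mat n U" "i < n" "j < n" shows "cmod (U $$ (i, j)) \<le> 1"
proof -
  have U: "U \<in> carrier_mat n n" "dagger U * U = 1\<^sub>m n" using assms unfolding unit_mat_def by auto
  have e1: "(dagger U * U) $$ (j, j) = (\<Sum>k<n. cnj (U $$ (k, j)) * U $$ (k, j))"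
    using U(1) assms dagger_carrier[OF U(1)] by (simp add: scalar_prod_def atLeast0LessThan dagger_index)
  have e2: "(\<Sum>k<n. cnj (U $$ (k, j)) * U $$ (k, j)) = complex_of_real (\<Sum>k<n. (cmod (U $$ (k, j)))\<^sup>2)"
    unfolding of_real_sum by (intro sum.cong refl) (rule cnj_mult_self)
  have e3: "(dagger U * U) $$ (j, j) = 1" using U assms by simp
  from e1 e2 e3 have "complex_of_real (\<Sum>k<n. (cmod (U $$ (k, j)))\<^sup>2) = 1" by simp
  then have s: "(\<Sum>k<n. (cmod (U $$ (k, j)))\<^sup>2) = 1" by (metis of_real_eq_1_iff)
  have "(cmod (U $$ (i, j)))\<^sup>2 \<le> (\<Sum>k<n. (cmod (U $$ (k, j)))\<^sup>2)"
    using assms(2) by (intro member_le_sum) auto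
  then have "(cmod (U $$ (i, j)))\<^sup>2 \<le> 1" using s by simp
  then show ?thesis by (simp add: power_le_one_iff abs_le_square_iff) 
qed

lemma herm_inv_unit:
  assumes "hermitian_mat d A" "A * A = 1\<^sub>m d" shows "unit_mat d A"
  using assms unfolding hermitian_mat_def unit_mat_def by simp

lemma op_prod_list_unit:
  assumes "\<forall>k\<in>set ks. unit_mat d (A k)"
  shows "unit_mat d (foldr (\<lambda>k B. A k * B) ks (1\<^sub>m d))"
  using assms by (induction ks) (auto intro: unit_mult unit_one)

lemma op_prod_unit:
  assumes adm: "admissible N M E d A" and sub: "E n \<subseteq> {..<N}"
  shows "unit_mat d (op_prod d A (E n))"
proof -
  have fin: "finite (E n)" using sub finite_subset by blast
  show ?thesis unfolding op_prod_def
    using adm sub fin unfolding admissible_def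
    by (intro op_prod_list_unit) (auto intro: herm_inv_unit)
qed

lemma bell_carrier:
  assumes adm: "admissible N M E d A" and sub: "\<forall>n<M. E n \<subseteq> {..<N}"
  shows "bell_operator M E x d A \<in> carrier_mat d d"
proof -
  have u: "unit_mat d (op_prod d A (E n))" if "n < M" for n
    using op_prod_unit[OF adm] sub that by blast
  have car: "\<forall>n<M. complex_of_real (x n) \<cdot>\<^sub>m op_prod d A (E n) \<in> carrier_mat d d"
    using u unfolding unit_mat_def by auto
  show "bell_operator M E x d A \<in> carrier_mat d d"
    unfolding bell_operator_def by (rule foldr_upt_carrier[OF car])
qed

lemma bell_entry_bound:
  assumes adm: "admissible N M E d A" and sub: "\<forall>n<M. E n \<subseteq> {..<N}" and ij: "i < d" "j < d"
  shows "cmod (bell_operator M E x d A $$ (i, j)) \<le> (\<Sum>n<M. \<bar>x n\<bar>)"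
    "bell_operator M E x d A \<in> carrier_mat d d"
proof -
  have u: "unit_mat d (op_prod d A (E n))" if "n < M" for n
    using op_prod_unit[OF adm] sub that by blast
  have car: "\<forall>n<M. complex_of_real (x n) \<cdot>\<^sub>m op_prod d A (E n) \<in> carrier_mat d d"
    using u unfolding unit_mat_def by auto
  show "bell_operator M E x d A \<in> carrier_mat d d"
    unfolding bell_operator_def by (rule foldr_upt_carrier[OF car])
  have "bell_operator M E x d A $$ (i, j) = (\<Sum>n<M. (complex_of_real (x n) \<cdot>\<^sub>m op_prod d A (E n)) $$ (i, j))"
    unfolding bell_operator_def by (rule foldr_upt_index[OF car ij])
  also have "\<dots> = (\<Sum>n<M. complex_of_real (x n) * op_prod d A (E n) $$ (i, j))"
  proof (rule sum.cong)
    fix n assume "n \<in> {..<M}"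
    then have "op_prod d A (E n) \<in> carrier_mat d d" using u unfolding unit_mat_def by auto
    then show "(complex_of_real (x n) \<cdot>\<^sub>m op_prod d A (E n)) $$ (i, j) = complex_of_real (x n) * op_prod d A (E n) $$ (i, j)"
      using ij by simp
  qed simp
  finally have e: "bell_operator M E x d A $$ (i, j) = (\<Sum>n<M. complex_of_real (x n) * op_prod d A (E n) $$ (i, j))" .
  have "cmod (\<Sum>n<M. complex_of_real (x n) * op_prod d A (E n) $$ (i, j)) \<le> (\<Sum>n<M. cmod (complex_of_real (x n) * op_prod d A (E n) $$ (i, j)))"
    by (rule norm_sum)
  also have "\<dots> \<le> (\<Sum>n<M. \<bar>x n\<bar>)"
  proof (rule sum_mono)
    fix n assume "n \<in> {..<M}"
    then have "cmod (op_prod d A (E n) $$ (i, j)) \<le> 1" using unit_entry[OF u ij] by simp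
    then show "cmod (complex_of_real (x n) * op_prod d A (E n) $$ (i, j)) \<le> \<bar>x n\<bar>"
      by (simp add: norm_mult mult_left_le)
  qed
  finally show "cmod (bell_operator M E x d A $$ (i, j)) \<le> (\<Sum>n<M. \<bar>x n\<bar>)" using e by simp
qed

lemma trace_mult_expand:
  assumes "\<omega> \<in> carrier_mat d d" "B \<in> carrier_mat d d"
  shows "mtrace (\<omega> * B) = (\<Sum>i<d. \<Sum>j<d. \<omega> $$ (i, j) * B $$ (j, i))"
  unfolding mtrace_def using assms by (intro sum.cong) (auto simp: scalar_prod_def atLeast0LessThan)

lemma trace_bound:
  assumes adm: "admissible N M E d A" and sub: "\<forall>n<M. E n \<subseteq> {..<N}"
    and w: "\<omega> \<in> carrier_mat d d" and c: "\<forall>i<d. \<forall>j<d. cmod (\<omega> $$ (i, j)) \<le> c"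
  shows "Re (mtrace (\<omega> * bell_operator M E x d A)) \<le> real d * real d * c * (\<Sum>n<M. \<bar>x n\<bar>)"
proof -
  let ?B = "bell_operator M E x d A"
  let ?X = "\<Sum>n<M. \<bar>x n\<bar>"
  have Bc: "?B \<in> carrier_mat d d" by (rule bell_carrier[OF adm sub])
  have "Re (mtrace (\<omega> * ?B)) \<le> cmod (mtrace (\<omega> * ?B))" by (rule complex_Re_le_cmod)
  also have "\<dots> \<le> (\<Sum>i<d. \<Sum>j<d. cmod (\<omega> $$ (i, j) * ?B $$ (j, i)))"
    unfolding trace_mult_expand[OF w Bc]
    by (rule order_trans[OF norm_sum sum_mono[OF norm_sum]])
  also have "\<dots> \<le> (\<Sum>i<d. \<Sum>j<d. c * ?X)"
  proof (intro sum_mono)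
    fix i j assume "i \<in> {..<d}" "j \<in> {..<d}"
    then have "cmod (\<omega> $$ (i, j)) \<le> c" "cmod (?B $$ (j, i)) \<le> ?X"
      using c bell_entry_bound(1)[OF adm sub] by auto
    then show "cmod (\<omega> $$ (i, j) * ?B $$ (j, i)) \<le> c * ?X"
      by (simp add: norm_mult mult_mono')
  qed
  also have "\<dots> = real d * real d * c * ?X" by simp
  finally show ?thesis .
qed



lemma idx_lt: fixes i b d0 dB :: nat assumes "i < d0" "b < dB" shows "i * dB + b < d0 * dB"
proof -
  have "(i + 1) * dB \<le> d0 * dB" using assms(1) by (intro mult_le_mono1) simp
  then show ?thesis using assms(2) by simp
qed

lemma pure_entry_le1:
  assumes "pure_state D \<psi>" "k < D" shows "cmod (\<psi> $ k) \<le> 1"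
proof -
  have "(cmod (\<psi> $ k))\<^sup>2 \<le> (\<Sum>i<D. (cmod (\<psi> $ i))\<^sup>2)"
    using assms(2) by (intro member_le_sum) auto
  then have "(cmod (\<psi> $ k))\<^sup>2 \<le> 1" using assms(1) unfolding pure_state_def by simp
  then show ?thesis by (simp add: power_le_one_iff abs_le_square_iff)
qed

lemma ptrace_carrier: "ptrace_B d0 dB X \<in> carrier_mat d0 d0"
  unfolding ptrace_B_def by simp

lemma ptrace_proj_bound:
  assumes ps: "pure_state (d0 * dB) \<psi>" and ij: "i < d0" "j < d0"
  shows "cmod (ptrace_B d0 dB (proj_vec \<psi>) $$ (i, j)) \<le> real dB"
proof -
  have dv: "dim_vec \<psi> = d0 * dB" using ps unfolding pure_state_def by auto
  have "ptrace_B d0 dB (proj_vec \<psi>) $$ (i, j) = (\<Sum>b<dB. \<psi> $ (i * dB + b) * cnj (\<psi> $ (j * dB + b)))"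
    unfolding ptrace_B_def using ij dv idx_lt[OF ij(1)] idx_lt[OF ij(2)]
    by (simp add: proj_vec_def)
  also have "cmod \<dots> \<le> (\<Sum>b<dB. cmod (\<psi> $ (i * dB + b) * cnj (\<psi> $ (j * dB + b))))" by (rule norm_sum)
  also have "\<dots> \<le> (\<Sum>b<dB. 1)"
  proof (rule sum_mono)
    fix b assume "b \<in> {..<dB}"
    then have "cmod (\<psi> $ (i * dB + b)) \<le> 1" "cmod (\<psi> $ (j * dB + b)) \<le> 1"
      using pure_entry_le1[OF ps] idx_lt ij by auto
    then show "cmod (\<psi> $ (i * dB + b) * cnj (\<psi> $ (j * dB + b))) \<le> 1"
      by (simp add: norm_mult mult_le_one)
  qed
  finally show ?thesis by simp
qed

lemma one_admissible: "admissible N M E d (\<lambda>_. 1\<^sub>m d)"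
  unfolding admissible_def hermitian_mat_def dagger_one by simp

lemma Cset_nonempty: "{Re (mtrace (\<omega> * bell_operator M E x d A)) | A. admissible N M E d A} \<noteq> {}"
  using one_admissible by blast

lemma Cval_pure_bound:
  assumes sub: "\<forall>n<M. E n \<subseteq> {..<N}" and ps: "pure_state (d0 * dB) \<psi>"
  defines "\<omega> \<equiv> ptrace_B d0 dB (proj_vec \<psi>)"
  shows "\<forall>s\<in>{Re (mtrace (\<omega> * bell_operator M E x d0 A)) | A. admissible N M E d0 A}.
            s \<le> real d0 * real d0 * real dB * (\<Sum>n<M. \<bar>x n\<bar>)"
    "C_val N M E x d0 \<omega> \<le> real d0 * real d0 * real dB * (\<Sum>n<M. \<bar>x n\<bar>)"
    "bdd_above {Re (mtrace (\<omega> * bell_operator M E x d0 A)) | A. admissible N M E d0 A}"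
proof -
  show b: "\<forall>s\<in>{Re (mtrace (\<omega> * bell_operator M E x d0 A)) | A. admissible N M E d0 A}.
            s \<le> real d0 * real d0 * real dB * (\<Sum>n<M. \<bar>x n\<bar>)"
  proof
    fix s assume "s \<in> {Re (mtrace (\<omega> * bell_operator M E x d0 A)) | A. admissible N M E d0 A}"
    then obtain A where A: "admissible N M E d0 A" "s = Re (mtrace (\<omega> * bell_operator M E x d0 A))" by blast
    show "s \<le> real d0 * real d0 * real dB * (\<Sum>n<M. \<bar>x n\<bar>)"
      unfolding A(2) using ptrace_proj_bound[OF ps] ptrace_carrier
      by (intro trace_bound[OF A(1) sub]) (auto simp: \<omega>_def)
  qed
  then show "C_val N M E x d0 \<omega> \<le> real d0 * real d0 * real dB * (\<Sum>n<M. \<bar>x n\<bar>)"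
    unfolding C_val_def by (intro cSup_least Cset_nonempty) auto
  from b show "bdd_above {Re (mtrace (\<omega> * bell_operator M E x d0 A)) | A. admissible N M E d0 A}"
    by (intro bdd_aboveI) auto
qed

lemma ptrace_ens:
  assumes ens: "pure_ensemble (d0 * dB) \<rho> K P \<Psi>" and ij: "i < d0" "j < d0"
  shows "ptrace_B d0 dB \<rho> $$ (i, j) = (\<Sum>m<K. complex_of_real (P m) * ptrace_B d0 dB (proj_vec (\<Psi> m)) $$ (i, j))"
proof -
  let ?D = "d0 * dB"
  have car: "\<forall>m<K. complex_of_real (P m) \<cdot>\<^sub>m proj_vec (\<Psi> m) \<in> carrier_mat ?D ?D"
    using ens unfolding pure_ensemble_def pure_state_def proj_vec_def by auto
  have rho: "\<rho> = foldr (\<lambda>m B. complex_of_real (P m) \<cdot>\<^sub>m proj_vec (\<Psi> m) + B) [0..<K] (0\<^sub>m ?D ?D)"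
    using ens unfolding pure_ensemble_def by auto
  have dv: "dim_vec (\<Psi> m) = ?D" if "m < K" for m using ens that unfolding pure_ensemble_def pure_state_def by auto
  have "ptrace_B d0 dB \<rho> $$ (i, j) = (\<Sum>b<dB. \<rho> $$ (i * dB + b, j * dB + b))"
    unfolding ptrace_B_def using ij by simp
  also have "\<dots> = (\<Sum>b<dB. \<Sum>m<K. complex_of_real (P m) * proj_vec (\<Psi> m) $$ (i * dB + b, j * dB + b))"
  proof (rule sum.cong)
    fix b assume b: "b \<in> {..<dB}"
    have l: "i * dB + b < ?D" "j * dB + b < ?D" using idx_lt ij b by auto
    show "\<rho> $$ (i * dB + b, j * dB + b) = (\<Sum>m<K. complex_of_real (P m) * proj_vec (\<Psi> m) $$ (i * dB + b, j * dB + b))"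
      unfolding rho foldr_upt_index[OF car l]
    proof (rule sum.cong)
      fix m assume "m \<in> {..<K}"
      then show "(complex_of_real (P m) \<cdot>\<^sub>m proj_vec (\<Psi> m)) $$ (i * dB + b, j * dB + b) =
          complex_of_real (P m) * proj_vec (\<Psi> m) $$ (i * dB + b, j * dB + b)"
        using dv l by (simp add: proj_vec_def)
    qed simp
  qed simp
  also have "\<dots> = (\<Sum>m<K. \<Sum>b<dB. complex_of_real (P m) * proj_vec (\<Psi> m) $$ (i * dB + b, j * dB + b))"
    by (rule sum.swap)
  also have "\<dots> = (\<Sum>m<K. complex_of_real (P m) * ptrace_B d0 dB (proj_vec (\<Psi> m)) $$ (i, j))"
    unfolding ptrace_B_def using ij by (simp add: sum_distrib_left)
  finally show ?thesis .
qed

lemma trace_ens: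
  assumes ens: "pure_ensemble (d0 * dB) \<rho> K P \<Psi>" and Bc: "B \<in> carrier_mat d0 d0"
  shows "Re (mtrace (ptrace_B d0 dB \<rho> * B)) = (\<Sum>m<K. P m * Re (mtrace (ptrace_B d0 dB (proj_vec (\<Psi> m)) * B)))"
proof -
  have "mtrace (ptrace_B d0 dB \<rho> * B) = (\<Sum>i<d0. \<Sum>j<d0. ptrace_B d0 dB \<rho> $$ (i, j) * B $$ (j, i))"
    by (rule trace_mult_expand[OF ptrace_carrier Bc])
  also have "\<dots> = (\<Sum>i<d0. \<Sum>j<d0. \<Sum>m<K. complex_of_real (P m) * (ptrace_B d0 dB (proj_vec (\<Psi> m)) $$ (i, j) * B $$ (j, i)))"
    by (intro sum.cong refl) (simp add: ptrace_ens[OF ens] sum_distrib_right mult.assoc)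
  also have "\<dots> = (\<Sum>m<K. complex_of_real (P m) * (\<Sum>i<d0. \<Sum>j<d0. ptrace_B d0 dB (proj_vec (\<Psi> m)) $$ (i, j) * B $$ (j, i)))"
    by (simp add: sum_distrib_left sum.swap[of _ "{..<K}"])
  also have "\<dots> = (\<Sum>m<K. complex_of_real (P m) * mtrace (ptrace_B d0 dB (proj_vec (\<Psi> m)) * B))"
    by (simp add: trace_mult_expand[OF ptrace_carrier Bc])
  finally show ?thesis by (simp add: Re_sum)
qed



theorem mainTheorem5:
  fixes N M :: nat and E :: "nat \<Rightarrow> nat set" and x :: "nat \<Rightarrow> real"
    and d0 dB :: nat and \<rho> :: "complex mat"
  assumes "nc_inequality N M E x"
    and "density_mat (d0 * dB) \<rho>"
  shows "ent_E N M E x d0 dB \<rho> + C_val N M E x d0 (ptrace_B d0 dB \<rho>) \<le> C_max N M E x d0"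
proof -
  have sub: "\<forall>n<M. E n \<subseteq> {..<N}" using assms(1) unfolding nc_inequality_def by auto
  define Cm where "Cm = C_max N M E x d0"
  define K0 where "K0 = real d0 * real d0 * real dB * (\<Sum>n<M. \<bar>x n\<bar>)"
  define T where "T = {(\<Sum>m<K. P m * (Cm - C_val N M E x d0 (ptrace_B d0 dB (proj_vec (\<Psi> m)))))
          | K P \<Psi>. pure_ensemble (d0 * dB) \<rho> K P \<Psi>}"
  have entE: "ent_E N M E x d0 dB \<rho> = Inf T" unfolding ent_E_def T_def Cm_def ..
  obtain K P \<Psi> where ens: "pure_ensemble (d0 * dB) \<rho> K P \<Psi>"
    using ensemble_exists[OF assms(2)] by blast
  have P0: "\<forall>m<K. P m \<ge> 0" and Ps: "(\<Sum>m<K. P m) = 1" and ps: "\<forall>m<K. pure_state (d0 * dB) (\<Psi> m)"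
    using ens unfolding pure_ensemble_def by auto
  define cv where "cv m = C_val N M E x d0 (ptrace_B d0 dB (proj_vec (\<Psi> m)))" for m
  define t0 where "t0 = (\<Sum>m<K. P m * (Cm - cv m))"
  have t0T: "t0 \<in> T" unfolding t0_def T_def cv_def using ens by blast
  have bdd: "bdd_below T"
  proof (rule bdd_belowI)
    fix t assume "t \<in> T"
    then obtain K' P' \<Psi>' where e': "pure_ensemble (d0 * dB) \<rho> K' P' \<Psi>'"
      and t: "t = (\<Sum>m<K'. P' m * (Cm - C_val N M E x d0 (ptrace_B d0 dB (proj_vec (\<Psi>' m)))))"
      unfolding T_def by blast
    have P0': "\<forall>m<K'. P' m \<ge> 0" and Ps': "(\<Sum>m<K'. P' m) = 1" and ps': "\<forall>m<K'. pure_state (d0 * dB) (\<Psi>' m)"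
      using e' unfolding pure_ensemble_def by auto
    have "Cm - K0 = (\<Sum>m<K'. P' m * (Cm - K0))" using Ps' by (simp add: sum_distrib_right[symmetric])
    also have "\<dots> \<le> t" unfolding t
    proof (rule sum_mono)
      fix m assume "m \<in> {..<K'}"
      then have "C_val N M E x d0 (ptrace_B d0 dB (proj_vec (\<Psi>' m))) \<le> K0" "P' m \<ge> 0"
        using Cval_pure_bound(2)[OF sub] ps' P0' unfolding K0_def by auto
      then show "P' m * (Cm - K0) \<le> P' m * (Cm - C_val N M E x d0 (ptrace_B d0 dB (proj_vec (\<Psi>' m))))"
        by (intro mult_left_mono) auto
    qed
    finally show "Cm - K0 \<le> t" .
  qed
  have infle: "Inf T \<le> t0" by (rule cInf_lower[OF t0T bdd])
  have conv: "C_val N M E x d0 (ptrace_B d0 dB \<rho>) \<le> (\<Sum>m<K. P m * cv m)"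
    unfolding C_val_def
  proof (rule cSup_least[OF Cset_nonempty])
    fix s assume "s \<in> {Re (mtrace (ptrace_B d0 dB \<rho> * bell_operator M E x d0 A)) | A. admissible N M E d0 A}"
    then obtain A where A: "admissible N M E d0 A" "s = Re (mtrace (ptrace_B d0 dB \<rho> * bell_operator M E x d0 A))"
      by blast
    have "s = (\<Sum>m<K. P m * Re (mtrace (ptrace_B d0 dB (proj_vec (\<Psi> m)) * bell_operator M E x d0 A)))"
      unfolding A(2) by (rule trace_ens[OF ens bell_carrier[OF A(1) sub]])
    also have "\<dots> \<le> (\<Sum>m<K. P m * cv m)"
    proof (rule sum_mono)
      fix m assume m: "m \<in> {..<K}"
      have "Re (mtrace (ptrace_B d0 dB (proj_vec (\<Psi> m)) * bell_operator M E x d0 A)) \<le> cv m"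
        unfolding cv_def C_val_def
        using Cval_pure_bound(3)[OF sub, where \<psi> = "\<Psi> m" and x = x] ps m A(1)
        by (intro cSup_upper) auto
      then show "P m * Re (mtrace (ptrace_B d0 dB (proj_vec (\<Psi> m)) * bell_operator M E x d0 A)) \<le> P m * cv m"
        using P0 m by (intro mult_left_mono) auto
    qed
    finally show "s \<le> (\<Sum>m<K. P m * cv m)" .
  qed
  have "t0 = Cm - (\<Sum>m<K. P m * cv m)"
    unfolding t0_def using Ps by (simp add: right_diff_distrib sum_subtractf sum_distrib_right[symmetric])
  then show ?thesis unfolding entE Cm_def[symmetric] using infle conv by simp
qed

end
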